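(* For all $v,w\in\mathfrak{H}^0$, $Z_q^t(v\stackrel{t}{\ast}_\hbar w)=Z_q^t(v)\,Z_q^t(w)$.
   Context: Let $q$, $t$ be formal parameters and $[n]=\frac{1-q^n}{1-q}$. For positive integers $k_1,\dots,k_l$ with $k_1\ge 2$ put $\zeta_q(k_1,\dots,k_l)=\sum_{m_1>\cdots>m_l\ge1}\prod_{a=1}^l \frac{q^{(k_a-1)m_a}}{[m_a]^{k_a}}$. Define $\zeta_q^t(k_1,\dots,k_l)=\sum'_{\mathbf p}(1-q)^{k-\mathrm{wt}(\mathbf p)}\zeta_q(\mathbf p)\,t^{l-\mathrm{dep}(\mathbf p)}$, where $k=k_1+\cdots+k_l$, wt and dep denote the sum and the number of entries of an index, and $\mathbf p$ runs over all indices $(k_1\ \square\ k_2\ \square\cdots\square\ k_l)$ with each $\square$ filled by "," , "$+$" or "$-1+$". Let $\hbar$ be a formal variable, $\mathfrak{H}=\mathbb{Q}[\hbar,t]\langle x,y\rangle$, $\mathfrak{H}^1=\mathbb{Q}[\hbar,t]+\mathfrak{H}y$, $\mathfrak{H}^0=\mathbb{Q}[\hbar,t]+x\mathfrak{H}y$, $z_j=x^{j-1}y$. Let $Z_q^t:\mathfrak{H}^0\to\mathbb{Q}[t][[q]]$ be the composition of the $\mathbb{Q}[\hbar,t]$-linear map $\widehat Z_q^t$ with $\widehat Z_q^t(1)=1$, $\widehat Z_q^t(z_{k_1}\cdots z_{k_l})=\zeta_q^t(k_1,\dots,k_l)$ ($k_1\ge2$), followed by the substitution $\hbar\mapsto1-q$.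 Let $z_i\circ_+ z_j=z_{i+j}+\hbar z_{i+j-1}$ on the $\mathbb{Q}[\hbar,t]$-span $\mathfrak z$ of the $z_j$, extended to an action on $\mathfrak{H}^1$ by $z_i\circ_+1=0$, $z_i\circ_+(z_jw)=(z_i\circ_+z_j)w$. The product $\stackrel{t}{\ast}_\hbar$ on $\mathfrak{H}^1$ is the $\mathbb{Q}[\hbar,t]$-bilinear product with $1\stackrel{t}{\ast}_\hbar w=w\stackrel{t}{\ast}_\hbar1=w$ and $z_iu\stackrel{t}{\ast}_\hbar z_jv=z_i(u\stackrel{t}{\ast}_\hbar z_jv)+z_j(z_iu\stackrel{t}{\ast}_\hbar v)+(1-2t)(z_i\circ_+z_j)(u\stackrel{t}{\ast}_\hbar v)+(t^2-t)\,z_i\circ_+z_j\circ_+(u\stackrel{t}{\ast}_\hbar v)$ for $i,j\ge1$ and words $u,v,w$ ($(z_i\circ_+z_j)X$ denotes concatenation; $z_i\circ_+z_j\circ_+X=(z_i\circ_+z_j)\circ_+X$). *)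

theory Defs
  imports "HOL-Analysis.Analysis" "HOL-Computational_Algebra.Computational_Algebra"
    "HOL-Library.Poly_Mapping"
begin

type_synonym coeff = "rat poly poly"  \<comment> \<open>outer variable hbar, inner variable t\<close>

definition hbar :: coeff where "hbar = [:0, 1:]"
definition tvar :: coeff where "tvar = [:[:0, 1:]:]"

text \<open>Substitution hbar := 1 - q, from Q[hbar,t] into Q[t][[q]] (= rat poly fps).\<close>
definition subst_hbar :: "coeff \<Rightarrow> rat poly fps" where
  "subst_hbar c = poly (map_poly fps_const c) (1 - fps_X)"

definition embed_fps :: "rat fps \<Rightarrow> rat poly fps" where
  "embed_fps f = Abs_fps (\<lambda>n. [: fps_nth f n :])"

definition qint :: "nat \<Rightarrow> rat fps" where
  "qint n = (1 - fps_X ^ n) / (1 - fps_X)"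

text \<open>Index sets of the summation: strictly decreasing sequences of positive integers
  of length l; the sum is the (unconditional) infinite sum in the q-adic topology of fps.\<close>
definition zeta_q :: "nat list \<Rightarrow> rat fps" where
  "zeta_q ks = infsum (\<lambda>ms. \<Prod>a<length ks.
       fps_X ^ ((ks ! a - 1) * (ms ! a)) * inverse (qint (ms ! a)) ^ (ks ! a))
     {ms :: nat list. length ms = length ks \<and> sorted_wrt (>) ms \<and> (\<forall>m\<in>set ms. 1 \<le> m)}"

datatype box = Comma | Plus | MinusPlus

fun fill :: "nat list \<Rightarrow> box list \<Rightarrow> nat list" where
  "fill [k] [] = [k]"
| "fill (k1 # k2 # ks) (Comma # bs) = k1 # fill (k2 # ks) bs"
| "fill (k1 # k2 # ks) (Plus # bs) = fill ((k1 + k2) # ks) bs"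
| "fill (k1 # k2 # ks) (MinusPlus # bs) = fill ((k1 + k2 - 1) # ks) bs"
| "fill _ _ = []"

definition fillings :: "nat \<Rightarrow> box list set" where
  "fillings n = set (List.n_lists n [Comma, Plus, MinusPlus])"

definition zeta_qt :: "nat list \<Rightarrow> rat poly fps" where
  "zeta_qt ks = (\<Sum>bs\<in>fillings (length ks - 1).
      let p = fill ks bs in
        (1 - fps_X) ^ (sum_list ks - sum_list p) * embed_fps (zeta_q p)
        * fps_const ([:0, 1:] ^ (length ks - length p)))"

text \<open>A word z_{k1}...z_{kl} (= x^{k1-1} y ... x^{kl-1} y) is encoded as [k1,...,kl];
  the empty word is 1.\<close>
type_synonym hmod = "nat list \<Rightarrow>\<^sub>0 coeff"

definition H1 :: "hmod set" where
  "H1 = {v. \<forall>ks\<in>Poly_Mapping.keys v. \<forall>k\<in>set ks. 1 \<le> k}"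

definition H0 :: "hmod set" where
  "H0 = {v. \<forall>ks\<in>Poly_Mapping.keys v. (\<forall>k\<in>set ks. 1 \<le> k) \<and> (ks \<noteq> [] \<longrightarrow> 2 \<le> hd ks)}"

definition scal :: "coeff \<Rightarrow> hmod \<Rightarrow> hmod" where
  "scal c v = Poly_Mapping.map (\<lambda>a. c * a) v"

definition lin :: "(nat list \<Rightarrow> hmod) \<Rightarrow> hmod \<Rightarrow> hmod" where
  "lin f v = (\<Sum>u\<in>Poly_Mapping.keys v. scal (Poly_Mapping.lookup v u) (f u))"

definition word :: "nat list \<Rightarrow> hmod" where
  "word u = Poly_Mapping.single u 1"

definition zcons :: "nat \<Rightarrow> hmod \<Rightarrow> hmod" where
  "zcons i = lin (\<lambda>u. word (i # u))"

fun circ_word :: "nat \<Rightarrow> nat list \<Rightarrow> hmod" where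
  "circ_word i [] = 0"
| "circ_word i (j # u) = word ((i + j) # u) + scal hbar (word ((i + j - 1) # u))"

definition circ :: "nat \<Rightarrow> hmod \<Rightarrow> hmod" where
  "circ i = lin (circ_word i)"

fun tprod_word :: "nat list \<Rightarrow> nat list \<Rightarrow> hmod" where
  "tprod_word [] v = word v"
| "tprod_word u [] = word u"
| "tprod_word (i # u) (j # v) =
     zcons i (tprod_word u (j # v)) + zcons j (tprod_word (i # u) v)
     + scal (1 - 2 * tvar) (zcons (i + j) (tprod_word u v) + scal hbar (zcons (i + j - 1) (tprod_word u v)))
     + scal (tvar ^ 2 - tvar) (circ (i + j) (tprod_word u v) + scal hbar (circ (i + j - 1) (tprod_word u v)))"

definition tprod :: "hmod \<Rightarrow> hmod \<Rightarrow> hmod" where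
  "tprod v w = (\<Sum>u\<in>Poly_Mapping.keys v. \<Sum>u'\<in>Poly_Mapping.keys w. scal (Poly_Mapping.lookup v u * Poly_Mapping.lookup w u') (tprod_word u u'))"

definition Zhat_word :: "nat list \<Rightarrow> rat poly fps" where
  "Zhat_word u = (if u = [] then 1 else zeta_qt u)"

definition Zqt :: "hmod \<Rightarrow> rat poly fps" where
  "Zqt v = (\<Sum>u\<in>Poly_Mapping.keys v. subst_hbar (Poly_Mapping.lookup v u) * Zhat_word u)"

end

theory Submission
  imports Defs
begin

lemma fps_const_sum: "fps_const (\<Sum>i\<in>A. f i) = (\<Sum>i\<in>A. fps_const (f i))"
  by (induction A rule: infinite_finite_induct) (auto simp flip: fps_const_add)

lemma map_poly_fps_const_add:
  "map_poly fps_const (p + q) = map_poly fps_const p + map_poly (fps_const :: 'a::comm_ring_1 \<Rightarrow> _) q"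
  by (rule poly_eqI) (simp add: coeff_map_poly)

lemma map_poly_fps_const_mult:
  "map_poly fps_const (p * q) = map_poly fps_const p * map_poly (fps_const :: 'a::comm_ring_1 \<Rightarrow> _) q"
  by (rule poly_eqI) (simp add: coeff_map_poly coeff_mult fps_const_sum)

lemma subst_add [simp]: "subst_hbar (a + b) = subst_hbar a + subst_hbar b"
  by (simp add: subst_hbar_def map_poly_fps_const_add)

lemma subst_mult [simp]: "subst_hbar (a * b) = subst_hbar a * subst_hbar b"
  by (simp add: subst_hbar_def map_poly_fps_const_mult)

lemma subst_0 [simp]: "subst_hbar 0 = 0"
  by (simp add: subst_hbar_def)

lemma subst_1 [simp]: "subst_hbar 1 = 1"
  by (simp add: subst_hbar_def)

lemma subst_uminus [simp]: "subst_hbar (- a) = - subst_hbar a"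
proof -
  have "subst_hbar (- a) + subst_hbar a = 0" by (simp flip: subst_add)
  then show ?thesis by (simp add: eq_neg_iff_add_eq_0)
qed

lemma subst_diff [simp]: "subst_hbar (a - b) = subst_hbar a - subst_hbar b"
  using subst_add[of a "- b"] by simp

lemma subst_power [simp]: "subst_hbar (a ^ n) = subst_hbar a ^ n"
  by (induction n) simp_all

lemma subst_hbar_hbar [simp]: "subst_hbar hbar = 1 - fps_X"
  by (simp add: subst_hbar_def hbar_def map_poly_pCons)

abbreviation Tv :: "rat poly fps" where "Tv \<equiv> fps_const [:0, 1:]"

lemma subst_tvar [simp]: "subst_hbar tvar = Tv"
  by (simp add: subst_hbar_def tvar_def map_poly_pCons)

lemma subst_two [simp]: "subst_hbar 2 = 2"
  using subst_add[of 1 1] by (simp add: one_add_one)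

section \<open>Linear functionals on hmod\<close>

definition LIN :: "(nat list \<Rightarrow> rat poly fps) \<Rightarrow> hmod \<Rightarrow> rat poly fps" where
  "LIN \<phi> X = (\<Sum>u\<in>Poly_Mapping.keys X. subst_hbar (Poly_Mapping.lookup X u) * \<phi> u)"

lemma LIN_superset:
  assumes "finite K" "Poly_Mapping.keys X \<subseteq> K"
  shows "LIN \<phi> X = (\<Sum>u\<in>K. subst_hbar (Poly_Mapping.lookup X u) * \<phi> u)"
  unfolding LIN_def
  by (rule sum.mono_neutral_left[OF assms]) (auto simp: in_keys_iff)

lemma LIN_0 [simp]: "LIN \<phi> 0 = 0"
  by (simp add: LIN_def)

lemma LIN_add [simp]: "LIN \<phi> (X + Y) = LIN \<phi> X + LIN \<phi> Y"
proof -
  let ?K = "Poly_Mapping.keys X \<union> Poly_Mapping.keys Y"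
  have "LIN \<phi> (X + Y) = (\<Sum>u\<in>?K. subst_hbar (Poly_Mapping.lookup (X + Y) u) * \<phi> u)"
    by (rule LIN_superset) (auto simp: keys_add)
  also have "\<dots> = (\<Sum>u\<in>?K. subst_hbar (Poly_Mapping.lookup X u) * \<phi> u)
       + (\<Sum>u\<in>?K. subst_hbar (Poly_Mapping.lookup Y u) * \<phi> u)"
    by (simp add: lookup_add distrib_right sum.distrib)
  also have "\<dots> = LIN \<phi> X + LIN \<phi> Y"
    by (subst (1 2) LIN_superset[of ?K]) auto
  finally show ?thesis .
qed

lemma lookup_scal [simp]: "Poly_Mapping.lookup (scal c X) u = c * Poly_Mapping.lookup X u"
  by (simp add: scal_def map.rep_eq when_def)

lemma keys_scal: "Poly_Mapping.keys (scal c X) \<subseteq> Poly_Mapping.keys X"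
  by (auto simp: in_keys_iff)

lemma LIN_scal [simp]: "LIN \<phi> (scal c X) = subst_hbar c * LIN \<phi> X"
proof -
  have "LIN \<phi> (scal c X) = (\<Sum>u\<in>Poly_Mapping.keys X. subst_hbar (Poly_Mapping.lookup (scal c X) u) * \<phi> u)"
    by (rule LIN_superset) (auto simp: keys_scal)
  then show ?thesis by (simp add: LIN_def sum_distrib_left mult.assoc)
qed

lemma LIN_sum: "LIN \<phi> (\<Sum>x\<in>A. X x) = (\<Sum>x\<in>A. LIN \<phi> (X x))"
  by (induction A rule: infinite_finite_induct) auto

lemma LIN_word [simp]: "LIN \<phi> (word u) = \<phi> u"
  by (simp add: LIN_def word_def)

lemma LIN_lin: "LIN \<phi> (lin f X) = LIN (\<lambda>u. LIN \<phi> (f u)) X"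
  by (simp only: lin_def LIN_sum LIN_scal) (simp add: LIN_def)

lemma LIN_cong: "(\<And>u. u \<in> Poly_Mapping.keys X \<Longrightarrow> \<phi> u = \<psi> u) \<Longrightarrow> LIN \<phi> X = LIN \<psi> X"
  by (simp add: LIN_def)

lemma LIN_fadd: "LIN (\<lambda>u. \<phi> u + \<psi> u) X = LIN \<phi> X + LIN \<psi> X"
  by (simp add: LIN_def distrib_left sum.distrib)

lemma LIN_fcmult: "LIN (\<lambda>u. c * \<phi> u) X = c * LIN \<phi> X"
  by (simp add: LIN_def sum_distrib_left mult.left_commute)

lemma LIN_fzero: "LIN (\<lambda>u. 0) X = 0"
  by (simp add: LIN_def)

lemma LIN_zcons: "LIN \<phi> (zcons i X) = LIN (\<lambda>u. \<phi> (i # u)) X"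
  by (simp add: zcons_def LIN_lin)

lemma LIN_circ: "LIN \<phi> (circ i X) = LIN (\<lambda>u. LIN \<phi> (circ_word i u)) X"
  by (simp add: circ_def LIN_lin)

lemma LIN_tprod: "LIN \<phi> (tprod v w) = (\<Sum>u\<in>Poly_Mapping.keys v. \<Sum>u'\<in>Poly_Mapping.keys w.
   subst_hbar (Poly_Mapping.lookup v u) * subst_hbar (Poly_Mapping.lookup w u') * LIN \<phi> (tprod_word u u'))"
  by (simp add: tprod_def LIN_sum)

lemma keys_lin: "Poly_Mapping.keys (lin f X) \<subseteq> (\<Union>u\<in>Poly_Mapping.keys X. Poly_Mapping.keys (f u))"
  unfolding lin_def using keys_sum keys_scal by fastforce

lemma keys_word: "Poly_Mapping.keys (word u) = {u}"
  by (simp add: word_def)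

lemma keys_zcons: "Poly_Mapping.keys (zcons i X) \<subseteq> (\<lambda>u. i # u) ` Poly_Mapping.keys X"
  unfolding zcons_def using keys_lin[of "\<lambda>u. word (i # u)" X] by (auto simp: keys_word)

lemma keys_circ_word: "Poly_Mapping.keys (circ_word i u) \<subseteq> {(i + j) # w |j w. u = j # w} \<union> {(i + j - 1) # w |j w. u = j # w}"
  by (cases u) (use keys_add keys_scal in \<open>fastforce simp: keys_word\<close>)+

definition W1 :: "nat list set" where "W1 = {u. \<forall>k\<in>set u. 1 \<le> k}"
definition W0 :: "nat list set" where "W0 = {u. u \<in> W1 \<and> (u \<noteq> [] \<longrightarrow> 2 \<le> hd u)}"

lemma keys_circ: "Poly_Mapping.keys (circ i X) \<subseteq> (\<Union>u\<in>Poly_Mapping.keys X. Poly_Mapping.keys (circ_word i u))"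
  unfolding circ_def by (rule keys_lin)

lemma keys_addD: "w \<in> Poly_Mapping.keys (A + B) \<Longrightarrow> w \<in> Poly_Mapping.keys A \<or> w \<in> Poly_Mapping.keys B"
  using keys_add[of A B] by auto

lemma keys_scalD: "w \<in> Poly_Mapping.keys (scal c A) \<Longrightarrow> w \<in> Poly_Mapping.keys A"
  using keys_scal[of c A] by auto

lemma keys_zconsD: "w \<in> Poly_Mapping.keys (zcons k X) \<Longrightarrow> \<exists>y. w = k # y \<and> y \<in> Poly_Mapping.keys X"
  using keys_zcons[of k X] by auto

lemma keys_circD: "w \<in> Poly_Mapping.keys (circ k X) \<Longrightarrow> \<exists>j y. (w = (k + j) # y \<or> w = (k + j - 1) # y) \<and> j # y \<in> Poly_Mapping.keys X"
proof -
  assume "w \<in> Poly_Mapping.keys (circ k X)"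
  then obtain u where u: "u \<in> Poly_Mapping.keys X" "w \<in> Poly_Mapping.keys (circ_word k u)"
    using keys_circ by blast
  then show ?thesis using keys_circ_word[of k u] by blast
qed

lemma keys_tprod_consD:
  assumes "w \<in> Poly_Mapping.keys (tprod_word (i # u) (j # v))"
  shows "w \<in> Poly_Mapping.keys (zcons i (tprod_word u (j # v))) \<or> w \<in> Poly_Mapping.keys (zcons j (tprod_word (i # u) v))
      \<or> w \<in> Poly_Mapping.keys (zcons (i+j) (tprod_word u v)) \<or> w \<in> Poly_Mapping.keys (zcons (i+j-1) (tprod_word u v))
      \<or> w \<in> Poly_Mapping.keys (circ (i+j) (tprod_word u v)) \<or> w \<in> Poly_Mapping.keys (circ (i+j-1) (tprod_word u v))"
proof -
  note A = assms[unfolded tprod_word.simps]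
  from keys_addD[OF A] consider "w \<in> Poly_Mapping.keys (zcons i (tprod_word u (j # v)) + zcons j (tprod_word (i # u) v) +
         scal (1 - 2 * tvar) (zcons (i + j) (tprod_word u v) + scal hbar (zcons (i + j - 1) (tprod_word u v))))"
    | "w \<in> Poly_Mapping.keys (scal (tvar\<^sup>2 - tvar) (circ (i + j) (tprod_word u v) + scal hbar (circ (i + j - 1) (tprod_word u v))))"
    by blast
  then show ?thesis
  proof cases
    case 1
    from keys_addD[OF 1] show ?thesis
    proof
      assume "w \<in> Poly_Mapping.keys (zcons i (tprod_word u (j # v)) + zcons j (tprod_word (i # u) v))"
      from keys_addD[OF this] show ?thesis by blast
    next
      assume "w \<in> Poly_Mapping.keys (scal (1 - 2 * tvar) (zcons (i + j) (tprod_word u v) + scal hbar (zcons (i + j - 1) (tprod_word u v))))"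
      from keys_addD[OF keys_scalD[OF this]] show ?thesis using keys_scalD by blast
    qed
  next
    case 2
    from keys_addD[OF keys_scalD[OF 2]] show ?thesis using keys_scalD by blast
  qed
qed

lemma keys_tprod_word_W1:
  "u \<in> W1 \<Longrightarrow> v \<in> W1 \<Longrightarrow> Poly_Mapping.keys (tprod_word u v) \<subseteq> W1"
proof (induction u v rule: tprod_word.induct)
  case (1 v) then show ?case by (simp add: keys_word)
next
  case (2 v va) then show ?case by (simp add: keys_word)
next
  case (3 i u j v)
  have zc: "w \<in> W1" if "1 \<le> k" "Poly_Mapping.keys X \<subseteq> W1" "w \<in> Poly_Mapping.keys (zcons k X)" for k X w
    using keys_zconsD[OF that(3)] that(1,2) unfolding W1_def by force
  have cc: "w \<in> W1" if "1 \<le> k" "Poly_Mapping.keys X \<subseteq> W1" "w \<in> Poly_Mapping.keys (circ k X)" for k X w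
    using keys_circD[OF that(3)] that(1,2) by (fastforce simp: W1_def)
  have i: "1 \<le> i" "u \<in> W1" and j: "1 \<le> j" "v \<in> W1" using "3.prems" by (auto simp: W1_def)
  note IH = "3.IH"(1)[OF i(2) "3.prems"(2)] "3.IH"(2)[OF "3.prems"(1) j(2)] "3.IH"(3)[OF i(2) j(2)]
  have ij: "1 \<le> i + j" "1 \<le> i + j - 1" using i j by auto
  show ?case
  proof
    fix w assume "w \<in> Poly_Mapping.keys (tprod_word (i # u) (j # v))"
    from keys_tprod_consD[OF this] show "w \<in> W1"
      using zc[OF i(1) IH(1)] zc[OF j(1) IH(2)] zc[OF ij(1) IH(3)] zc[OF ij(2) IH(3)]
        cc[OF ij(1) IH(3)] cc[OF ij(2) IH(3)]
      by blast
  qed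
qed

lemma keys_tprod_word_W0:
  assumes "u \<in> W0" "v \<in> W0"
  shows "Poly_Mapping.keys (tprod_word u v) \<subseteq> W0"
proof (cases "u = [] \<or> v = []")
  case True then show ?thesis using assms by (cases u; cases v) (auto simp: keys_word)
next
  case False
  then obtain i u' j v' where uv: "u = i # u'" "v = j # v'" by (cases u; cases v) auto
  have W1: "Poly_Mapping.keys (tprod_word u v) \<subseteq> W1"
    using assms keys_tprod_word_W1 by (auto simp: W0_def)
  have ij: "2 \<le> i" "2 \<le> j" using assms uv by (auto simp: W0_def)
  have X3: "Poly_Mapping.keys (tprod_word u' v') \<subseteq> W1"
    using assms uv by (intro keys_tprod_word_W1) (auto simp: W0_def W1_def)
  have hd: "w \<noteq> [] \<and> 2 \<le> hd w" if "w \<in> Poly_Mapping.keys (tprod_word u v)" for w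
  proof -
    have zc: "\<And>k X. 2 \<le> k \<Longrightarrow> w \<in> Poly_Mapping.keys (zcons k X) \<Longrightarrow> w \<noteq> [] \<and> 2 \<le> hd w"
      using keys_zconsD by fastforce
    have cc: "\<And>k. 2 \<le> k \<Longrightarrow> w \<in> Poly_Mapping.keys (circ k (tprod_word u' v')) \<Longrightarrow> w \<noteq> [] \<and> 2 \<le> hd w"
    proof -
      fix k assume k: "2 \<le> k" and w: "w \<in> Poly_Mapping.keys (circ k (tprod_word u' v'))"
      from keys_circD[OF w] obtain j y where "w = (k + j) # y \<or> w = (k + j - 1) # y" "j # y \<in> W1"
        using X3 by blast
      then show "w \<noteq> [] \<and> 2 \<le> hd w" using k by (auto simp: W1_def)
    qed
    have "2 \<le> i + j" "2 \<le> i + j - 1" using ij by auto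
    with keys_tprod_consD[OF that[unfolded uv]] show ?thesis using zc[OF ij(1)] zc[OF ij(2)] zc cc
      by blast
  qed
  show ?thesis
  proof
    fix w assume w: "w \<in> Poly_Mapping.keys (tprod_word u v)"
    have "w \<in> W1" using W1 w by (rule subsetD)
    then show "w \<in> W0" using hd[OF w] by (simp add: W0_def)
  qed
qed

lemma keys_sum_subset: "(\<And>x. x \<in> A \<Longrightarrow> Poly_Mapping.keys (f x) \<subseteq> B) \<Longrightarrow> Poly_Mapping.keys (sum f A) \<subseteq> B"
proof (induction A rule: infinite_finite_induct)
  case (insert x F)
  then show ?case using keys_add[of "f x" "sum f F"] by auto
qed auto

lemma keys_tprod: "Poly_Mapping.keys (tprod v w) \<subseteq> (\<Union>u\<in>Poly_Mapping.keys v. \<Union>u'\<in>Poly_Mapping.keys w. Poly_Mapping.keys (tprod_word u u'))"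
  unfolding tprod_def
  by (intro keys_sum_subset order.trans[OF keys_scal]) auto

section \<open>The local factors\<close>

lemma const_poly_add: "[:a + b:] = [:a:] + [:b::'a::comm_monoid_add:]"
  by simp

lemma const_poly_sum: "[:sum f A:] = (\<Sum>x\<in>A. [:f x:])"
proof (induction A rule: infinite_finite_induct)
  case (insert x F)
  then show ?case by (simp only: sum.insert[OF insert(1,2)] const_poly_add insert.IH)
qed auto

lemma embed_nth [simp]: "embed_fps f $ n = [:f $ n:]"
  by (simp add: embed_fps_def)

lemma embed_add [simp]: "embed_fps (f + g) = embed_fps f + embed_fps g"
  by (rule fps_ext) simp

lemma embed_diff [simp]: "embed_fps (f - g) = embed_fps f - embed_fps g"
  by (rule fps_ext) simp

lemma embed_mult [simp]: "embed_fps (f * g) = embed_fps f * embed_fps g"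
  by (rule fps_ext) (simp add: fps_mult_nth const_poly_sum mult.commute)

lemma embed_1 [simp]: "embed_fps 1 = 1"
  by (rule fps_ext) simp

lemma embed_0 [simp]: "embed_fps 0 = 0"
  by (rule fps_ext) simp

lemma embed_X [simp]: "embed_fps fps_X = fps_X"
  by (rule fps_ext) (simp add: fps_X_def)

lemma embed_power [simp]: "embed_fps (f ^ n) = embed_fps f ^ n"
  by (induction n) simp_all

lemma embed_sum: "embed_fps (sum f A) = (\<Sum>x\<in>A. embed_fps (f x))"
  by (induction A rule: infinite_finite_induct) auto

definition Fq :: "nat \<Rightarrow> nat \<Rightarrow> rat fps" where
  "Fq k j = fps_X ^ ((k - 1) * j) * inverse (qint j) ^ k"

definition Fe :: "nat \<Rightarrow> nat \<Rightarrow> rat poly fps" where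
  "Fe k j = embed_fps (Fq k j)"

lemma qint_0: "1 \<le> j \<Longrightarrow> qint j $ 0 = 1"
  by (simp add: qint_def fps_divide_unit)

lemma qint_mult: "qint j * (1 - fps_X) = 1 - fps_X ^ j"
proof -
  have "(1 - fps_X :: rat fps) $ 0 \<noteq> 0" by simp
  then show ?thesis
    unfolding qint_def by (simp add: fps_divide_unit mult.assoc inverse_mult_eq_1)
qed

lemma ring_id_aux:
  fixes x y :: "'a::comm_ring_1"
  shows "x ^ (a * j) * y ^ Suc a * (x ^ (b * j) * y ^ Suc b)
       = x ^ (Suc (a + b) * j) * y ^ (Suc (Suc (a + b))) + ((1 - x ^ j) * y) * (x ^ ((a + b) * j) * y ^ Suc (a + b))"
  by (simp add: power_add add_mult_distrib algebra_simps)

lemma Fq_mult: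
  assumes "1 \<le> a" "1 \<le> b" "1 \<le> j"
  shows "Fq a j * Fq b j = Fq (a + b) j + (1 - fps_X) * Fq (a + b - 1) j"
proof -
  obtain a' b' where ab: "a = Suc a'" "b = Suc b'" using assms by (cases a; cases b) auto
  define I where "I = inverse (qint j)"
  have "I * qint j = 1" unfolding I_def by (rule inverse_mult_eq_1) (use qint_0[OF assms(3)] in simp)
  then have h: "(1 - fps_X :: rat fps) = (1 - fps_X ^ j) * I"
    by (metis (no_types, lifting) mult.assoc mult.commute mult_1 qint_mult)
  show ?thesis
    unfolding Fq_def I_def[symmetric] ab h
    using ring_id_aux[of fps_X a' j I b'] by simp
qed

lemma Fe_mult:
  assumes "1 \<le> a" "1 \<le> b" "1 \<le> j"
  shows "Fe a j * Fe b j = Fe (a + b) j + (1 - fps_X) * Fe (a + b - 1) j"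
  unfolding Fe_def using Fq_mult[OF assms] by (metis embed_1 embed_X embed_add embed_diff embed_mult)

fun Y :: "nat \<Rightarrow> nat list \<Rightarrow> rat poly fps" where
  "Y j [] = 0"
| "Y j (k # X) = Fe k j * ((if X = [] then 1 else (\<Sum>i\<in>{1..<j}. Y i X)) + Tv * Y j X)"

definition AN :: "nat \<Rightarrow> nat list \<Rightarrow> rat poly fps" where
  "AN m X = (if X = [] then 1 else (\<Sum>i\<in>{1..<m}. Y i X))"

lemma Y_cons: "Y j (k # X) = Fe k j * (AN j X + Tv * Y j X)"
  by (simp add: AN_def)

declare Y.simps(2) [simp del]

lemma AN_Nil [simp]: "AN m [] = 1"
  by (simp add: AN_def)

lemma AN_Suc: "AN (Suc m) u = AN m u + (if m = 0 then 0 else Y m u)"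
  by (cases u) (auto simp: AN_def)

section \<open>The truncated product formula\<close>

lemma AN0_cons [simp]: "AN 0 (k # u) = 0"
  by (simp add: AN_def)

lemma LIN_AN0_zcons [simp]: "LIN (AN 0) (zcons i X) = 0"
  by (simp add: LIN_zcons LIN_fzero)

lemma LIN_AN0_circ [simp]: "LIN (AN 0) (circ c X) = 0"
proof -
  have "LIN (AN 0) (circ_word c u) = 0" for u
    by (cases u) simp_all
  then show ?thesis by (simp add: LIN_circ LIN_fzero)
qed

lemma subst_c1 [simp]: "subst_hbar (1 - 2 * tvar) = 1 - 2 * Tv"
  by simp

lemma subst_c2 [simp]: "subst_hbar (tvar\<^sup>2 - tvar) = Tv\<^sup>2 - Tv"
  by simp

lemma LIN_eps: "LIN (AN 0) (tprod_word u v) = AN 0 u * AN 0 v"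
  by (cases u; cases v) simp_all

lemma LIN_Y_zcons: "LIN (Y m) (zcons i X) = Fe i m * (LIN (AN m) X + Tv * LIN (Y m) X)"
proof -
  have "LIN (Y m) (zcons i X) = LIN (\<lambda>u. Fe i m * (AN m u + Tv * Y m u)) X"
    by (simp only: LIN_zcons Y_cons)
  also have "\<dots> = Fe i m * (LIN (AN m) X + Tv * LIN (Y m) X)"
    by (simp only: LIN_fcmult LIN_fadd)
  finally show ?thesis .
qed

lemma LIN_Y_circ:
  assumes "Poly_Mapping.keys X \<subseteq> W1" "1 \<le> i" "1 \<le> j" "1 \<le> m"
  shows "LIN (Y m) (circ (i + j) X) + (1 - fps_X) * LIN (Y m) (circ (i + j - 1) X) = Fe i m * Fe j m * LIN (Y m) X"
proof -
  let ?H = "1 - fps_X :: rat poly fps"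
  have "LIN (Y m) (circ (i + j) X) + ?H * LIN (Y m) (circ (i + j - 1) X)
      = LIN (\<lambda>u. LIN (Y m) (circ_word (i + j) u) + ?H * LIN (Y m) (circ_word (i + j - 1) u)) X"
    by (simp only: LIN_circ LIN_fadd LIN_fcmult)
  also have "\<dots> = LIN (\<lambda>u. Fe i m * Fe j m * Y m u) X"
  proof (rule LIN_cong)
    fix u assume "u \<in> Poly_Mapping.keys X"
    then have u: "u \<in> W1" using assms(1) by blast
    show "LIN (Y m) (circ_word (i + j) u) + ?H * LIN (Y m) (circ_word (i + j - 1) u) = Fe i m * Fe j m * Y m u"
    proof (cases u)
      case Nil then show ?thesis by simp
    next
      case (Cons k w)
      then have k: "1 \<le> k" using u by (simp add: W1_def)
      define Z where "Z = AN m w + Tv * Y m w"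
      have e1: "Fe i m * Fe j m = Fe (i + j) m + ?H * Fe (i + j - 1) m"
        using Fe_mult[of i j m] assms by simp
      have e2: "Fe (i + j) m * Fe k m = Fe (i + j + k) m + ?H * Fe (i + j + k - 1) m"
        using Fe_mult[of "i + j" k m] assms k by simp
      have e3: "Fe (i + j - 1) m * Fe k m = Fe (i + j - 1 + k) m + ?H * Fe (i + j - 1 + k - 1) m"
        using Fe_mult[of "i + j - 1" k m] assms k by simp
      have "Fe i m * Fe j m * Y m u = (Fe (i + j) m * Fe k m + ?H * (Fe (i + j - 1) m * Fe k m)) * Z"
        unfolding Cons Y_cons Z_def[symmetric] e1 by (simp add: algebra_simps)
      also have "\<dots> = (Fe (i + j + k) m + ?H * Fe (i + j + k - 1) m) * Z
          + ?H * ((Fe (i + j - 1 + k) m + ?H * Fe (i + j - 1 + k - 1) m) * Z)"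
        unfolding e2 e3 by (simp add: algebra_simps)
      finally have R: "Fe i m * Fe j m * Y m u = (Fe (i + j + k) m + ?H * Fe (i + j + k - 1) m) * Z
          + ?H * ((Fe (i + j - 1 + k) m + ?H * Fe (i + j - 1 + k - 1) m) * Z)" .
      have L: "LIN (Y m) (circ_word (i + j) u) + ?H * LIN (Y m) (circ_word (i + j - 1) u)
         = (Fe (i + j + k) m + ?H * Fe (i + j + k - 1) m) * Z
          + ?H * ((Fe (i + j - 1 + k) m + ?H * Fe (i + j - 1 + k - 1) m) * Z)"
        unfolding Cons circ_word.simps LIN_add LIN_scal LIN_word subst_hbar_hbar Y_cons Z_def[symmetric]
        by (simp add: algebra_simps)
      show ?thesis unfolding L R ..
    qed
  qed
  also have "\<dots> = Fe i m * Fe j m * LIN (Y m) X"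
    by (simp only: LIN_fcmult)
  finally show ?thesis .
qed

lemma ring_Q:
  fixes f g t a1 b1 y1 z1 Au Av Yu Yv :: "'a::comm_ring_1"
  assumes "Yu = f * (a1 + t * y1)" "Yv = g * (b1 + t * z1)"
  shows "f * (a1 * Av + t * (y1 * Av + a1 * Yv + y1 * Yv)) + g * (Au * b1 + t * (Yu * b1 + Au * z1 + Yu * z1))
    + (1 - 2 * t) * (f * g * (a1 * b1 + t * (y1 * b1 + a1 * z1 + y1 * z1)))
    + (t\<^sup>2 - t) * (f * g * (y1 * b1 + a1 * z1 + y1 * z1)) = Yu * Av + Au * Yv + Yu * Yv"
  unfolding assms by (simp add: algebra_simps power2_eq_square)

lemma Q_step:
  assumes P: "\<And>u v. u \<in> W1 \<Longrightarrow> v \<in> W1 \<Longrightarrow> LIN (AN m) (tprod_word u v) = AN m u * AN m v"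
    and m: "1 \<le> m"
  shows "u \<in> W1 \<Longrightarrow> v \<in> W1 \<Longrightarrow> LIN (Y m) (tprod_word u v) = Y m u * AN m v + AN m u * Y m v + Y m u * Y m v"
proof (induction u v rule: tprod_word.induct)
  case (1 v) then show ?case by simp
next
  case (2 v va) then show ?case by simp
next
  case (3 i u j v)
  let ?H = "1 - fps_X :: rat poly fps"
  have i: "1 \<le> i" "u \<in> W1" and j: "1 \<le> j" "v \<in> W1" using "3.prems" by (auto simp: W1_def)
  note IH = "3.IH"(1)[OF i(2) "3.prems"(2)] "3.IH"(2)[OF "3.prems"(1) j(2)] "3.IH"(3)[OF i(2) j(2)]
  have K: "Poly_Mapping.keys (tprod_word u v) \<subseteq> W1" using i j keys_tprod_word_W1 by blast
  have A1: "LIN (AN m) (tprod_word u (j # v)) = AN m u * AN m (j # v)" using P i "3.prems" by blast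
  have A2: "LIN (AN m) (tprod_word (i # u) v) = AN m (i # u) * AN m v" using P j "3.prems" by blast
  have A3: "LIN (AN m) (tprod_word u v) = AN m u * AN m v" using P i j by blast
  have e1: "Fe i m * Fe j m = Fe (i + j) m + ?H * Fe (i + j - 1) m"
    using Fe_mult[of i j m] i j m by simp
  define Z where "Z = LIN (AN m) (tprod_word u v) + Tv * LIN (Y m) (tprod_word u v)"
  have zc: "LIN (Y m) (zcons (i + j) (tprod_word u v)) + ?H * LIN (Y m) (zcons (i + j - 1) (tprod_word u v))
     = Fe i m * Fe j m * Z"
    unfolding LIN_Y_zcons e1 Z_def by (simp add: algebra_simps)
  have cc: "LIN (Y m) (circ (i + j) (tprod_word u v)) + ?H * LIN (Y m) (circ (i + j - 1) (tprod_word u v))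
     = Fe i m * Fe j m * LIN (Y m) (tprod_word u v)"
    by (rule LIN_Y_circ[OF K i(1) j(1) m])
  have "LIN (Y m) (tprod_word (i # u) (j # v)) =
      LIN (Y m) (zcons i (tprod_word u (j # v))) + LIN (Y m) (zcons j (tprod_word (i # u) v))
      + (1 - 2 * Tv) * (LIN (Y m) (zcons (i + j) (tprod_word u v)) + ?H * LIN (Y m) (zcons (i + j - 1) (tprod_word u v)))
      + (Tv\<^sup>2 - Tv) * (LIN (Y m) (circ (i + j) (tprod_word u v)) + ?H * LIN (Y m) (circ (i + j - 1) (tprod_word u v)))"
    by simp
  also have "\<dots> = Fe i m * (AN m u * AN m (j # v) + Tv * (Y m u * AN m (j # v) + AN m u * Y m (j # v) + Y m u * Y m (j # v)))
      + Fe j m * (AN m (i # u) * AN m v + Tv * (Y m (i # u) * AN m v + AN m (i # u) * Y m v + Y m (i # u) * Y m v))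
      + (1 - 2 * Tv) * (Fe i m * Fe j m * (AN m u * AN m v + Tv * (Y m u * AN m v + AN m u * Y m v + Y m u * Y m v)))
      + (Tv\<^sup>2 - Tv) * (Fe i m * Fe j m * (Y m u * AN m v + AN m u * Y m v + Y m u * Y m v))"
    unfolding zc cc unfolding Z_def LIN_Y_zcons A1 A2 A3 IH ..
  also have "\<dots> = Y m (i # u) * AN m (j # v) + AN m (i # u) * Y m (j # v) + Y m (i # u) * Y m (j # v)"
    by (rule ring_Q) (simp_all only: Y_cons)
  finally show ?case .
qed

lemma P_all: "u \<in> W1 \<Longrightarrow> v \<in> W1 \<Longrightarrow> LIN (AN m) (tprod_word u v) = AN m u * AN m v"
proof (induction m arbitrary: u v)
  case 0 show ?case by (rule LIN_eps)
next
  case (Suc m)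
  show ?case
  proof (cases "m = 0")
    case True
    have "AN (Suc m) = AN 0" using True by (simp add: fun_eq_iff AN_Suc)
    then show ?thesis using LIN_eps by simp
  next
    case False
    then have m: "1 \<le> m" by simp
    have e: "AN (Suc m) = (\<lambda>u. AN m u + Y m u)" using False by (simp add: fun_eq_iff AN_Suc)
    have "LIN (AN (Suc m)) (tprod_word u v) = AN m u * AN m v + (Y m u * AN m v + AN m u * Y m v + Y m u * Y m v)"
      unfolding e LIN_fadd using Suc.IH Q_step[OF Suc.IH m] Suc.prems by simp
    then show ?thesis unfolding e by (simp add: algebra_simps)
  qed
qed

section \<open>Truncated q-MZVs and convergence\<close>

fun zN :: "nat \<Rightarrow> nat list \<Rightarrow> rat fps" where
  "zN m [] = 1"
| "zN m (k # ks) = (\<Sum>j\<in>{1..<m}. Fq k j * zN j ks)"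

definition CS :: "nat list \<Rightarrow> nat list set" where
  "CS ks = {ms :: nat list. length ms = length ks \<and> sorted_wrt (>) ms \<and> (\<forall>m\<in>set ms. 1 \<le> m)}"

definition CSm :: "nat \<Rightarrow> nat list \<Rightarrow> nat list set" where
  "CSm m ks = {ms \<in> CS ks. \<forall>x\<in>set ms. x < m}"

definition gt :: "nat list \<Rightarrow> nat list \<Rightarrow> rat fps" where
  "gt ks = (\<lambda>ms. \<Prod>a<length ks.
       fps_X ^ ((ks ! a - 1) * (ms ! a)) * inverse (qint (ms ! a)) ^ (ks ! a))"

lemma zeta_q_gt: "zeta_q ks = infsum (gt ks) (CS ks)"
  unfolding zeta_q_def gt_def CS_def ..

lemma gt_cons: "gt (k # ks) (j # ms) = Fq k j * gt ks ms"
  unfolding gt_def Fq_def by (simp add: prod.lessThan_Suc_shift del: prod.lessThan_Suc)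

lemma CS_Nil: "CS [] = {[]}"
  by (auto simp: CS_def)

lemma CSm_Nil: "CSm m [] = {[]}"
  by (auto simp: CSm_def CS_Nil)

lemma CSm_Cons: "CSm m (k # ks) = (\<lambda>(j, ms). j # ms) ` (SIGMA j:{1..<m}. CSm j ks)"
proof safe
  fix ms assume "ms \<in> CSm m (k # ks)"
  then obtain j ms' where ms: "ms = j # ms'" and P: "length ms' = length ks" "\<forall>y\<in>set ms'. y < j"
    "sorted_wrt (>) ms'" "1 \<le> j" "\<forall>x\<in>set ms'. 1 \<le> x" "j < m" "\<forall>x\<in>set ms'. x < m"
    by (cases ms) (auto simp: CSm_def CS_def)
  then show "ms \<in> (\<lambda>(j, ms). j # ms) ` (SIGMA j:{1..<m}. CSm j ks)"
    by (intro image_eqI[of _ _ "(j, ms')"]) (auto simp: CSm_def CS_def)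
next
  fix j ms' assume "j \<in> {1..<m}" "ms' \<in> CSm j ks"
  then show "j # ms' \<in> CSm m (k # ks)"
    by (auto simp: CSm_def CS_def)
qed

lemma CSm_sum: "finite (CSm m ks) \<and> sum (gt ks) (CSm m ks) = zN m ks"
proof (induction ks arbitrary: m)
  case Nil
  then show ?case by (simp add: CSm_Nil gt_def)
next
  case (Cons k ks)
  have inj: "inj_on (\<lambda>(j, ms). j # ms) (SIGMA j:{1..<m}. CSm j ks)"
    by (auto simp: inj_on_def)
  have fin: "finite (SIGMA j:{1..<m}. CSm j ks)"
    using Cons.IH by (intro finite_SigmaI) auto
  have "sum (gt (k # ks)) (CSm m (k # ks)) = (\<Sum>(j, ms)\<in>(SIGMA j:{1..<m}. CSm j ks). gt (k # ks) (j # ms))"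
    unfolding CSm_Cons by (subst sum.reindex[OF inj]) (simp add: case_prod_unfold)
  also have "\<dots> = (\<Sum>j\<in>{1..<m}. \<Sum>ms\<in>CSm j ks. Fq k j * gt ks ms)"
    by (subst sum.Sigma[symmetric]) (use Cons.IH in \<open>auto simp: gt_cons\<close>)
  also have "\<dots> = zN m (k # ks)"
    using Cons.IH by (simp add: sum_distrib_left[symmetric])
  finally show ?case using fin CSm_Cons by simp
qed

declare zN.simps(2) [simp del]

lemma gt_outside:
  assumes "ms \<in> CS (k # ks)" "ms \<notin> CSm m (k # ks)" "2 \<le> k" "n < m"
  shows "gt (k # ks) ms $ n = 0"
proof -
  obtain j ms' where ms: "ms = j # ms'" and P: "\<forall>y\<in>set ms'. y < j"
    using assms(1) by (cases ms) (auto simp: CS_def)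
  have "m \<le> j" using assms(1,2) P by (auto simp: CSm_def ms)
  then have "n < (k - 1) * j" using assms(3,4)
  proof -
    have "1 * j \<le> (k - 1) * j" using assms(3) by (intro mult_le_mono1) simp
    then have "j \<le> (k - 1) * j" by simp
    then show ?thesis using \<open>m \<le> j\<close> assms(4) by linarith
  qed
  then show ?thesis
    unfolding ms gt_cons Fq_def mult.assoc fps_X_power_mult_nth by simp
qed

lemma zN_stable:
  assumes "2 \<le> k" "n < m"
  shows "zN m (k # ks) $ n = zN (Suc n) (k # ks) $ n"
proof -
  let ?p = "k # ks"
  have sub: "CSm (Suc n) ?p \<subseteq> CSm m ?p" using assms by (auto simp: CSm_def)
  have fin: "finite (CSm m ?p)" using CSm_sum by blast
  have e1: "zN m ?p = sum (gt ?p) (CSm m ?p)" by (metis CSm_sum)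
  have "zN m ?p = sum (gt ?p) (CSm (Suc n) ?p) + sum (gt ?p) (CSm m ?p - CSm (Suc n) ?p)"
    unfolding e1 sum.subset_diff[OF sub fin] by (simp add: add.commute)
  moreover have "sum (gt ?p) (CSm m ?p - CSm (Suc n) ?p) $ n = 0"
    unfolding fps_sum_nth
    by (rule sum.neutral) (use gt_outside[OF _ _ assms(1), of _ _ "Suc n" n] in \<open>auto simp: CSm_def\<close>)
  moreover have e2: "zN (Suc n) ?p = sum (gt ?p) (CSm (Suc n) ?p)" by (metis CSm_sum)
  ultimately show ?thesis by simp
qed

lemma zeta_q_agree:
  assumes "2 \<le> k" "n < m"
  shows "zeta_q (k # ks) $ n = zN m (k # ks) $ n"
proof -
  let ?p = "k # ks"
  define L where "L = Abs_fps (\<lambda>n. zN (Suc n) ?p $ n)"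
  have "(gt ?p has_sum L) (CS ?p)"
    unfolding has_sum_def
  proof (rule tendsto_fpsI)
    fix n
    show "\<forall>\<^sub>F F in finite_subsets_at_top (CS ?p). sum (gt ?p) F $ n = L $ n"
      unfolding eventually_finite_subsets_at_top
    proof (intro exI conjI allI impI)
      show "finite (CSm (Suc n) ?p)" using CSm_sum by blast
      show "CSm (Suc n) ?p \<subseteq> CS ?p" by (auto simp: CSm_def)
      fix Y assume Y: "finite Y \<and> CSm (Suc n) ?p \<subseteq> Y \<and> Y \<subseteq> CS ?p"
      then have "sum (gt ?p) Y = sum (gt ?p) (CSm (Suc n) ?p) + sum (gt ?p) (Y - CSm (Suc n) ?p)"
        using sum.subset_diff[of "CSm (Suc n) ?p" Y] by (simp add: add.commute)
      moreover have "sum (gt ?p) (Y - CSm (Suc n) ?p) $ n = 0"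
        unfolding fps_sum_nth
        by (rule sum.neutral) (use gt_outside[OF _ _ assms(1), of _ _ "Suc n" n] Y in auto)
      ultimately show "sum (gt ?p) Y $ n = L $ n"
        using CSm_sum[of "Suc n" ?p] by (simp add: L_def)
    qed
  qed
  then have "zeta_q ?p = L" unfolding zeta_q_gt by (rule infsumI)
  then show ?thesis using zN_stable[OF assms] by (simp add: L_def)
qed



lemma fill_props:
  "length bs + 1 = length ks \<Longrightarrow> ks \<in> W1 \<Longrightarrow>
   fill ks bs \<noteq> [] \<and> length (fill ks bs) \<le> length ks \<and> sum_list (fill ks bs) \<le> sum_list ks
   \<and> fill ks bs \<in> W1 \<and> hd ks \<le> hd (fill ks bs)"
proof (induction ks bs rule: fill.induct)
  case (1 k)
  then show ?case by simp
next
  case (2 k1 k2 ks bs)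
  have "k2 # ks \<in> W1" "1 \<le> k1" "length bs + 1 = length (k2 # ks)" using "2.prems" by (auto simp: W1_def)
  note IH = "2.IH"[OF this(3,1)]
  show ?case using IH \<open>1 \<le> k1\<close> by (auto simp: W1_def)
next
  case (3 k1 k2 ks bs)
  have "(k1 + k2) # ks \<in> W1" "length bs + 1 = length ((k1 + k2) # ks)" using "3.prems" by (auto simp: W1_def)
  note IH = "3.IH"[OF this(2,1)]
  show ?case using IH by simp
next
  case (4 k1 k2 ks bs)
  have "(k1 + k2 - 1) # ks \<in> W1" "1 \<le> k2" "length bs + 1 = length ((k1 + k2 - 1) # ks)" using "4.prems" by (auto simp: W1_def)
  note IH = "4.IH"[OF this(3,1)]
  show ?case using IH \<open>1 \<le> k2\<close> by auto
qed (simp_all; fail)+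

lemma fillings_eq: "fillings n = {bs. length bs = n}"
proof -
  have "set bs \<subseteq> {Comma, Plus, MinusPlus}" for bs
    by (auto intro: box.exhaust)
  then show ?thesis by (auto simp: fillings_def set_n_lists)
qed

lemma finite_fillings [simp]: "finite (fillings n)"
  by (simp add: fillings_def)

lemma fillings_0: "fillings 0 = {[]}"
  by (simp add: fillings_eq)

lemma sum_fillings_Suc:
  "(\<Sum>bs\<in>fillings (Suc n). f bs) = (\<Sum>bs\<in>fillings n. f (Comma # bs))
     + (\<Sum>bs\<in>fillings n. f (Plus # bs)) + (\<Sum>bs\<in>fillings n. f (MinusPlus # bs))"
proof -
  let ?F = "fillings n"
  have eq: "fillings (Suc n) = ((#) Comma ` ?F \<union> (#) Plus ` ?F) \<union> (#) MinusPlus ` ?F"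
  proof safe
    fix bs assume "bs \<in> fillings (Suc n)"
    then obtain b bs' where "bs = b # bs'" "bs' \<in> ?F" by (cases bs) (auto simp: fillings_eq)
    then show "bs \<in> (#) Comma ` ?F" if "bs \<notin> (#) MinusPlus ` ?F" "bs \<notin> (#) Plus ` ?F"
      using that by (cases b) auto
  qed (auto simp: fillings_eq)
  show ?thesis
    unfolding eq
    by (subst sum.union_disjoint; (auto)?)+ (simp add: sum.reindex)
qed

definition Gt :: "nat \<Rightarrow> nat list \<Rightarrow> rat poly fps" where
  "Gt m ks = (\<Sum>bs\<in>fillings (length ks - 1).
      let p = fill ks bs in
        (1 - fps_X) ^ (sum_list ks - sum_list p) * embed_fps (zN m p)
        * fps_const ([:0, 1:] ^ (length ks - length p)))"

lemma Gt_single: "Gt m [k] = (\<Sum>j\<in>{1..<m}. Fe k j)"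
  by (simp add: Gt_def fillings_0 zN.simps(2) embed_sum Fe_def)

lemma AN_single: "AN m [k] = (\<Sum>j\<in>{1..<m}. Fe k j)"
  by (simp add: AN_def Y_cons)

lemma Gt_rec:
  assumes "k1 # k2 # rest \<in> W1"
  shows "Gt m (k1 # k2 # rest) = (\<Sum>j\<in>{1..<m}. Fe k1 j * Gt j (k2 # rest))
     + Tv * (Gt m ((k1 + k2) # rest) + (1 - fps_X) * Gt m ((k1 + k2 - 1) # rest))"
proof -
  let ?n = "length rest"
  let ?c = "\<lambda>ks p. (1 - fps_X :: rat poly fps) ^ (sum_list ks - sum_list p)"
  let ?t = "\<lambda>ks p. fps_const ([:0, 1:] ^ (length ks - length p)) :: rat poly fps"
  have k: "1 \<le> k1" "1 \<le> k2" "k2 # rest \<in> W1" "(k1 + k2) # rest \<in> W1" "(k1 + k2 - 1) # rest \<in> W1"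
    using assms by (auto simp: W1_def)
  have Gt': "Gt m ks = (\<Sum>bs\<in>fillings (length ks - 1). ?c ks (fill ks bs) * embed_fps (zN m (fill ks bs)) * ?t ks (fill ks bs))" for m ks
    by (simp add: Gt_def Let_def)
  have C: "(\<Sum>bs\<in>fillings ?n. ?c (k1 # k2 # rest) (fill (k1 # k2 # rest) (Comma # bs)) * embed_fps (zN m (fill (k1 # k2 # rest) (Comma # bs)))
         * ?t (k1 # k2 # rest) (fill (k1 # k2 # rest) (Comma # bs)))
     = (\<Sum>j\<in>{1..<m}. Fe k1 j * Gt j (k2 # rest))"
  proof -
    have "(\<Sum>bs\<in>fillings ?n. ?c (k1 # k2 # rest) (fill (k1 # k2 # rest) (Comma # bs)) * embed_fps (zN m (fill (k1 # k2 # rest) (Comma # bs)))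
         * ?t (k1 # k2 # rest) (fill (k1 # k2 # rest) (Comma # bs)))
      = (\<Sum>bs\<in>fillings ?n. \<Sum>j\<in>{1..<m}. Fe k1 j * (?c (k2 # rest) (fill (k2 # rest) bs) * embed_fps (zN j (fill (k2 # rest) bs))
         * ?t (k2 # rest) (fill (k2 # rest) bs)))"
      by (intro sum.cong refl) (simp add: zN.simps(2) embed_sum Fe_def sum_distrib_left sum_distrib_right mult_ac)
    also have "\<dots> = (\<Sum>j\<in>{1..<m}. Fe k1 j * Gt j (k2 # rest))"
      by (subst sum.swap) (simp add: Gt' sum_distrib_left)
    finally show ?thesis .
  qed
  have P: "?c (k1 # k2 # rest) (fill (k1 # k2 # rest) (Plus # bs)) * embed_fps (zN m (fill (k1 # k2 # rest) (Plus # bs)))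
         * ?t (k1 # k2 # rest) (fill (k1 # k2 # rest) (Plus # bs))
     = Tv * (?c ((k1 + k2) # rest) (fill ((k1 + k2) # rest) bs) * embed_fps (zN m (fill ((k1 + k2) # rest) bs))
         * ?t ((k1 + k2) # rest) (fill ((k1 + k2) # rest) bs))" if "bs \<in> fillings ?n" for bs
  proof -
    have "length (fill ((k1 + k2) # rest) bs) \<le> Suc ?n"
      using fill_props[OF _ k(4), of bs] that by (simp add: fillings_eq)
    then have e: "length (k1 # k2 # rest) - length (fill ((k1 + k2) # rest) bs) = Suc (length ((k1 + k2) # rest) - length (fill ((k1 + k2) # rest) bs))"
      by simp
    have f: "fill (k1 # k2 # rest) (Plus # bs) = fill ((k1 + k2) # rest) bs" by simp
    have s: "sum_list (k1 # k2 # rest) = sum_list ((k1 + k2) # rest)" by simp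
    show ?thesis unfolding f s e power_Suc fps_const_mult[symmetric] by (simp only: ac_simps)
  qed
  have M: "?c (k1 # k2 # rest) (fill (k1 # k2 # rest) (MinusPlus # bs)) * embed_fps (zN m (fill (k1 # k2 # rest) (MinusPlus # bs)))
         * ?t (k1 # k2 # rest) (fill (k1 # k2 # rest) (MinusPlus # bs))
     = Tv * ((1 - fps_X) * (?c ((k1 + k2 - 1) # rest) (fill ((k1 + k2 - 1) # rest) bs) * embed_fps (zN m (fill ((k1 + k2 - 1) # rest) bs))
         * ?t ((k1 + k2 - 1) # rest) (fill ((k1 + k2 - 1) # rest) bs)))" if "bs \<in> fillings ?n" for bs
  proof -
    have "length (fill ((k1 + k2 - 1) # rest) bs) \<le> Suc ?n" "sum_list (fill ((k1 + k2 - 1) # rest) bs) \<le> k1 + k2 - 1 + sum_list rest"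
      using fill_props[OF _ k(5), of bs] that by (simp_all add: fillings_eq)
    then have e: "length (k1 # k2 # rest) - length (fill ((k1 + k2 - 1) # rest) bs) = Suc (length ((k1 + k2 - 1) # rest) - length (fill ((k1 + k2 - 1) # rest) bs))"
      "sum_list (k1 # k2 # rest) - sum_list (fill ((k1 + k2 - 1) # rest) bs) = Suc (sum_list ((k1 + k2 - 1) # rest) - sum_list (fill ((k1 + k2 - 1) # rest) bs))"
      using k by simp_all
    have f: "fill (k1 # k2 # rest) (MinusPlus # bs) = fill ((k1 + k2 - 1) # rest) bs" by simp
    show ?thesis unfolding f e power_Suc fps_const_mult[symmetric] by (simp only: ac_simps)
  qed
  have G1: "Gt m (k # rest) = (\<Sum>bs\<in>fillings ?n. ?c (k # rest) (fill (k # rest) bs) * embed_fps (zN m (fill (k # rest) bs)) * ?t (k # rest) (fill (k # rest) bs))" for k m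
    by (simp add: Gt_def Let_def)
  have G2: "Gt m (k1 # k2 # rest) = (\<Sum>bs\<in>fillings (Suc ?n). ?c (k1 # k2 # rest) (fill (k1 # k2 # rest) bs) * embed_fps (zN m (fill (k1 # k2 # rest) bs))
         * ?t (k1 # k2 # rest) (fill (k1 # k2 # rest) bs))"
    by (simp add: Gt_def Let_def)
  have SP: "(\<Sum>bs\<in>fillings ?n. ?c (k1 # k2 # rest) (fill (k1 # k2 # rest) (Plus # bs)) * embed_fps (zN m (fill (k1 # k2 # rest) (Plus # bs)))
         * ?t (k1 # k2 # rest) (fill (k1 # k2 # rest) (Plus # bs))) = Tv * Gt m ((k1 + k2) # rest)"
    unfolding G1 sum_distrib_left by (rule sum.cong[OF refl P])
  have SM: "(\<Sum>bs\<in>fillings ?n. ?c (k1 # k2 # rest) (fill (k1 # k2 # rest) (MinusPlus # bs)) * embed_fps (zN m (fill (k1 # k2 # rest) (MinusPlus # bs)))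
         * ?t (k1 # k2 # rest) (fill (k1 # k2 # rest) (MinusPlus # bs))) = Tv * ((1 - fps_X) * Gt m ((k1 + k2 - 1) # rest))"
    unfolding G1 sum_distrib_left by (rule sum.cong[OF refl M])
  have "Gt m (k1 # k2 # rest) = (\<Sum>j\<in>{1..<m}. Fe k1 j * Gt j (k2 # rest)) + Tv * Gt m ((k1 + k2) # rest) + Tv * ((1 - fps_X) * Gt m ((k1 + k2 - 1) # rest))"
    unfolding G2 sum_fillings_Suc C SP SM ..
  then show ?thesis by (simp add: algebra_simps)
qed

lemma Gt_AN: "ks \<in> W1 \<Longrightarrow> ks \<noteq> [] \<Longrightarrow> Gt m ks = AN m ks"
proof (induction "length ks" arbitrary: ks m rule: less_induct)
  case less
  show ?case
  proof (cases ks)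
    case Nil then show ?thesis using less by simp
  next
    case (Cons k1 r)
    show ?thesis
    proof (cases r)
      case Nil then show ?thesis using Cons by (simp add: Gt_single AN_single)
    next
      case (Cons k2 rest)
      note ks = \<open>ks = k1 # r\<close>[unfolded Cons]
      have k: "1 \<le> k1" "1 \<le> k2" "k2 # rest \<in> W1" "(k1 + k2) # rest \<in> W1" "(k1 + k2 - 1) # rest \<in> W1"
        using less.prems ks by (auto simp: W1_def)
      have IH1: "Gt j (k2 # rest) = AN j (k2 # rest)" for j using less.hyps[of "k2 # rest"] ks k by simp
      have IH2: "Gt m ((k1 + k2) # rest) = AN m ((k1 + k2) # rest)" using less.hyps[of "(k1 + k2) # rest"] ks k by simp
      have IH3: "Gt m ((k1 + k2 - 1) # rest) = AN m ((k1 + k2 - 1) # rest)" using less.hyps[of "(k1 + k2 - 1) # rest"] ks k by simp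
      have "Tv * (AN m ((k1 + k2) # rest) + (1 - fps_X) * AN m ((k1 + k2 - 1) # rest))
          = Tv * (\<Sum>j\<in>{1..<m}. (Fe (k1 + k2) j + (1 - fps_X) * Fe (k1 + k2 - 1) j) * (AN j rest + Tv * Y j rest))"
        unfolding AN_def[of m "(k1 + k2) # rest"] AN_def[of m "(k1 + k2 - 1) # rest"] Y_cons
        by (simp add: sum_distrib_left sum.distrib sum_subtractf algebra_simps)
      also have "\<dots> = Tv * (\<Sum>j\<in>{1..<m}. Fe k1 j * Y j (k2 # rest))"
        by (intro arg_cong[where f = "\<lambda>x. Tv * x"] sum.cong refl)
           (use Fe_mult[of k1 k2] k in \<open>auto simp: Y_cons mult.assoc\<close>)
      finally have T: "Tv * (AN m ((k1 + k2) # rest) + (1 - fps_X) * AN m ((k1 + k2 - 1) # rest))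
          = Tv * (\<Sum>j\<in>{1..<m}. Fe k1 j * Y j (k2 # rest))" .
      have "Gt m ks = (\<Sum>j\<in>{1..<m}. Fe k1 j * AN j (k2 # rest)) + Tv * (\<Sum>j\<in>{1..<m}. Fe k1 j * Y j (k2 # rest))"
        unfolding ks Gt_rec[OF less.prems(1)[unfolded ks]] IH1 IH2 IH3 T ..
      also have "\<dots> = AN m ks"
        unfolding ks AN_def[of m "k1 # k2 # rest"] Y_cons
        by (simp add: sum_distrib_left sum.distrib sum_subtractf algebra_simps)
      finally show ?thesis .
    qed
  qed
qed


lemma agree_mult:
  fixes f f' g g' :: "'a::comm_semiring_1 fps"
  assumes "\<forall>i\<le>n. f $ i = f' $ i" "\<forall>i\<le>n. g $ i = g' $ i"
  shows "\<forall>i\<le>n. (f * g) $ i = (f' * g') $ i"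
  using assms by (auto simp: fps_mult_nth intro!: sum.cong)

lemma zeta_qt_agree:
  assumes "ks \<in> W0" "ks \<noteq> []" "n < m"
  shows "zeta_qt ks $ n = Gt m ks $ n"
proof -
  have ks1: "ks \<in> W1" using assms(1) by (simp add: W0_def)
  have "zeta_qt ks $ n = (\<Sum>bs\<in>fillings (length ks - 1). ((1 - fps_X) ^ (sum_list ks - sum_list (fill ks bs))
        * embed_fps (zeta_q (fill ks bs)) * fps_const ([:0, 1:] ^ (length ks - length (fill ks bs)))) $ n)"
    by (simp add: zeta_qt_def Let_def fps_sum_nth)
  also have "\<dots> = (\<Sum>bs\<in>fillings (length ks - 1). ((1 - fps_X) ^ (sum_list ks - sum_list (fill ks bs))
        * embed_fps (zN m (fill ks bs)) * fps_const ([:0, 1:] ^ (length ks - length (fill ks bs)))) $ n)"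
  proof (rule sum.cong[OF refl])
    fix bs assume "bs \<in> fillings (length ks - 1)"
    then have "length bs + 1 = length ks" using assms(2) by (simp add: fillings_eq)
    from fill_props[OF this ks1] obtain k ps where p: "fill ks bs = k # ps" and k: "hd ks \<le> k"
      by (cases "fill ks bs") auto
    have "2 \<le> hd ks" using assms(1,2) by (simp add: W0_def)
    with k have k2: "2 \<le> k" by simp
    have e: "\<forall>i\<le>n. embed_fps (zeta_q (fill ks bs)) $ i = embed_fps (zN m (fill ks bs)) $ i"
      unfolding p using zeta_q_agree[OF k2] assms(3) by simp
    let ?c = "(1 - fps_X :: rat poly fps) ^ (sum_list ks - sum_list (fill ks bs))"
    let ?t = "fps_const ([:0, 1:] ^ (length ks - length (fill ks bs))) :: rat poly fps"
    have e2: "\<forall>i\<le>n. (?c * embed_fps (zeta_q (fill ks bs))) $ i = (?c * embed_fps (zN m (fill ks bs))) $ i"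
      by (rule agree_mult[OF _ e]) simp
    have "\<forall>i\<le>n. (?c * embed_fps (zeta_q (fill ks bs)) * ?t) $ i = (?c * embed_fps (zN m (fill ks bs)) * ?t) $ i"
      by (rule agree_mult[OF e2]) simp
    then show "(?c * embed_fps (zeta_q (fill ks bs)) * ?t) $ n = (?c * embed_fps (zN m (fill ks bs)) * ?t) $ n"
      by simp
  qed
  also have "\<dots> = Gt m ks $ n"
    by (simp add: Gt_def Let_def fps_sum_nth)
  finally show ?thesis .
qed

lemma Zhat_agree:
  assumes "u \<in> W0" "n < m"
  shows "Zhat_word u $ n = AN m u $ n"
proof (cases "u = []")
  case True then show ?thesis by (simp add: Zhat_word_def)
next
  case False
  then have "Zhat_word u = zeta_qt u" by (simp add: Zhat_word_def)
  moreover have "Gt m u = AN m u" using Gt_AN[of u m] assms False by (simp add: W0_def)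
  ultimately show ?thesis using zeta_qt_agree[OF assms(1) False assms(2)] by simp
qed

lemma Zqt_agree:
  assumes "Poly_Mapping.keys X \<subseteq> W0" "n < m"
  shows "Zqt X $ n = LIN (AN m) X $ n"
  unfolding Zqt_def LIN_def fps_sum_nth
proof (rule sum.cong[OF refl])
  fix u assume uk: "u \<in> Poly_Mapping.keys X"
  have u: "u \<in> W0" using assms(1) uk by (rule subsetD)
  have "\<forall>i\<le>n. Zhat_word u $ i = AN m u $ i" using Zhat_agree[OF u] assms(2) by simp
  then have "\<forall>i\<le>n. (subst_hbar (Poly_Mapping.lookup X u) * Zhat_word u) $ i = (subst_hbar (Poly_Mapping.lookup X u) * AN m u) $ i"
    by (intro agree_mult) simp_all
  then show "(subst_hbar (Poly_Mapping.lookup X u) * Zhat_word u) $ n = (subst_hbar (Poly_Mapping.lookup X u) * AN m u) $ n"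
    using order_refl by blast
qed

lemma LIN_tprod_mult:
  assumes "Poly_Mapping.keys v \<subseteq> W1" "Poly_Mapping.keys w \<subseteq> W1"
  shows "LIN (AN m) (tprod v w) = LIN (AN m) v * LIN (AN m) w"
proof -
  have "LIN (AN m) (tprod v w) = (\<Sum>u\<in>Poly_Mapping.keys v. \<Sum>u'\<in>Poly_Mapping.keys w.
      subst_hbar (Poly_Mapping.lookup v u) * subst_hbar (Poly_Mapping.lookup w u') * (AN m u * AN m u'))"
    unfolding LIN_tprod
  proof (intro sum.cong refl)
    fix u u' assume "u \<in> Poly_Mapping.keys v" "u' \<in> Poly_Mapping.keys w"
    then have "u \<in> W1" "u' \<in> W1" using assms by (auto dest: subsetD)
    then show "subst_hbar (Poly_Mapping.lookup v u) * subst_hbar (Poly_Mapping.lookup w u') * LIN (AN m) (tprod_word u u') =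
         subst_hbar (Poly_Mapping.lookup v u) * subst_hbar (Poly_Mapping.lookup w u') * (AN m u * AN m u')"
      by (simp only: P_all)
  qed
  also have "\<dots> = LIN (AN m) v * LIN (AN m) w"
    by (simp add: LIN_def sum_product mult_ac)
  finally show ?thesis .
qed

lemma H0_keys: "v \<in> H0 \<Longrightarrow> Poly_Mapping.keys v \<subseteq> W0"
  by (auto simp: H0_def W0_def W1_def)

theorem proposition2p5:
  assumes "v \<in> H0" and "w \<in> H0"
  shows "Zqt (tprod v w) = Zqt v * Zqt w"
proof (rule fps_ext)
  fix n
  have v: "Poly_Mapping.keys v \<subseteq> W0" and w: "Poly_Mapping.keys w \<subseteq> W0"
    using assms H0_keys by auto
  then have v1: "Poly_Mapping.keys v \<subseteq> W1" and w1: "Poly_Mapping.keys w \<subseteq> W1"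
    by (auto simp: W0_def)
  have vw: "Poly_Mapping.keys (tprod v w) \<subseteq> W0"
    using keys_tprod[of v w] keys_tprod_word_W0 v w by blast
  have "Zqt (tprod v w) $ n = LIN (AN (Suc n)) (tprod v w) $ n"
    by (rule Zqt_agree[OF vw]) simp
  also have "\<dots> = (LIN (AN (Suc n)) v * LIN (AN (Suc n)) w) $ n"
    by (simp add: LIN_tprod_mult[OF v1 w1])
  also have "\<dots> = (Zqt v * Zqt w) $ n"
  proof -
    have a: "\<forall>i\<le>n. LIN (AN (Suc n)) v $ i = Zqt v $ i"
      using Zqt_agree[OF v, of _ "Suc n"] by simp
    have b: "\<forall>i\<le>n. LIN (AN (Suc n)) w $ i = Zqt w $ i"
      using Zqt_agree[OF w, of _ "Suc n"] by simp
    from agree_mult[OF a b] show ?thesis using order_refl by blast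
  qed
  finally show "Zqt (tprod v w) $ n = (Zqt v * Zqt w) $ n" .
qed

end
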